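(* Let $n\ge 2$ and $m\ge 1$ be integers and let $X$ be an $n\times m$ Latin hypercube design. Then $$d_1(X)\le \left\lfloor \frac{(n+1)m}{3}\right\rfloor,\qquad d_2(X)\le \sqrt{\left\lfloor \frac{n(n+1)m}{6}\right\rfloor }.$$
   Context: An $n\times m$ Latin hypercube design (LHD) is an $n\times m$ matrix each of whose columns is a permutation of $\{1,\ldots,n\}$. For rows $x_i=(x_{i1},\dots,x_{im})$ and $x_j$ and a positive integer $q$, $d_q(x_i,x_j)=\{\sum_{k=1}^m|x_{ik}-x_{jk}|^q\}^{1/q}$, and $d_q(X)=\min\{d_q(x_i,x_j):1\le i<j\le n\}$. *)

theory Defs
  imports Complex_Main
begin

text \<open>An n x m design is represented as X :: nat => nat => nat, where X i k is the
entry in row i (0 <= i < n) and column k (0 <= k < m).\<close>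

definition is_LHD :: "nat \<Rightarrow> nat \<Rightarrow> (nat \<Rightarrow> nat \<Rightarrow> nat) \<Rightarrow> bool" where
  "is_LHD n m X \<longleftrightarrow> (\<forall>k<m. bij_betw (\<lambda>i. X i k) {0..<n} {1..n})"

definition dq_rows :: "nat \<Rightarrow> nat \<Rightarrow> (nat \<Rightarrow> nat \<Rightarrow> nat) \<Rightarrow> nat \<Rightarrow> nat \<Rightarrow> real" where
  "dq_rows q m X i j =
     root q (\<Sum>k<m. \<bar>real (X i k) - real (X j k)\<bar> ^ q)"

definition dq :: "nat \<Rightarrow> nat \<Rightarrow> nat \<Rightarrow> (nat \<Rightarrow> nat \<Rightarrow> nat) \<Rightarrow> real" where
  "dq q n m X = Min {dq_rows q m X i j | i j. i < j \<and> j < n}"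

end

theory Submission
  imports Defs
begin


definition DD :: "nat \<Rightarrow> nat \<Rightarrow> (nat \<Rightarrow> nat \<Rightarrow> nat) \<Rightarrow> nat \<Rightarrow> nat \<Rightarrow> int" where
  "DD q m X i j = (\<Sum>k<m. \<bar>int (X i k) - int (X j k)\<bar> ^ q)"

definition GG :: "nat \<Rightarrow> nat \<Rightarrow> int" where
  "GG q n = (\<Sum>a\<in>{1..n}. \<Sum>b\<in>{1..n}. \<bar>int a - int b\<bar> ^ q)"

lemma sum1: "2 * (\<Sum>a\<in>{1..n}. int a) = int n * (int n + 1)"
  by (induction n) (auto simp: algebra_simps)

lemma sum2: "6 * (\<Sum>a\<in>{1..n}. int a ^ 2) = int n * (int n + 1) * (2 * int n + 1)"
  by (induction n) (auto simp: algebra_simps power2_eq_square)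

lemma inner_sym: "(\<Sum>a\<in>{1..n}. \<bar>int (Suc n) - int a\<bar> ^ q) = (\<Sum>a\<in>{1..n}. \<bar>int a - int (Suc n)\<bar> ^ q)"
  by (simp add: abs_minus_commute)



lemma GG_Suc: "GG q (Suc n) = GG q n + 2 * (\<Sum>a\<in>{1..n}. (int n + 1 - int a) ^ q) + (if q = 0 then 1 else 0)"
proof -
  have ni: "Suc n \<notin> {1..n}" by simp
  have e: "{1..Suc n} = insert (Suc n) {1..n}" by auto
  have a: "(\<Sum>a\<in>{1..n}. \<bar>int (Suc n) - int a\<bar> ^ q) = (\<Sum>a\<in>{1..n}. (int n + 1 - int a) ^ q)"
    by (rule sum.cong) (auto simp: add.commute)
  have b: "(\<Sum>a\<in>{1..n}. \<bar>int a - int (Suc n)\<bar> ^ q) = (\<Sum>a\<in>{1..n}. (int n + 1 - int a) ^ q)"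
    using a inner_sym by simp
  have "GG q (Suc n) = (\<bar>int (Suc n) - int (Suc n)\<bar> ^ q + (\<Sum>b\<in>{1..n}. \<bar>int (Suc n) - int b\<bar> ^ q))
     + (\<Sum>a\<in>{1..n}. \<bar>int a - int (Suc n)\<bar> ^ q + (\<Sum>b\<in>{1..n}. \<bar>int a - int b\<bar> ^ q))"
    unfolding GG_def e sum.insert[OF finite_atLeastAtMost ni] ..
  also have "\<dots> = (if q = 0 then 1 else 0) + (\<Sum>a\<in>{1..n}. (int n + 1 - int a) ^ q) + ((\<Sum>a\<in>{1..n}. (int n + 1 - int a) ^ q) + GG q n)"
    unfolding GG_def sum.distrib a b by simp
  finally show ?thesis by simp
qed


lemma GG1: "3 * GG 1 n = (int n - 1) * int n * (int n + 1)"
proof (induction n)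
  case 0 then show ?case by (simp add: GG_def)
next
  case (Suc n)
  have "(\<Sum>a\<in>{1..n}. (int n + 1 - int a) ^ 1) = (\<Sum>a\<in>{1..n}. (int n + 1)) - (\<Sum>a\<in>{1..n}. int a)"
    by (simp add: sum_subtractf)
  then have "2 * (\<Sum>a\<in>{1..n}. (int n + 1 - int a) ^ 1) = int n * (int n + 1)"
    using sum1[of n] by (simp add: algebra_simps)
  then show ?case using Suc by (simp add: GG_Suc algebra_simps)
qed



lemma GG2: "6 * GG 2 n = int n * int n * (int n * int n - 1)"
proof (induction n)
  case 0 then show ?case by (simp add: GG_def)
next
  case (Suc n)
  define c where "c = int n + 1"
  have "(\<Sum>a\<in>{1..n}. (c - int a) ^ 2) = (\<Sum>a\<in>{1..n}. c^2 - 2 * c * int a + int a ^ 2)"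
    by (rule sum.cong) (auto simp: power2_diff)
  also have "\<dots> = (\<Sum>a\<in>{1..n}. c^2) - 2 * c * (\<Sum>a\<in>{1..n}. int a) + (\<Sum>a\<in>{1..n}. int a ^ 2)"
    by (simp only: sum.distrib sum_subtractf sum_distrib_left)
  finally have e: "(\<Sum>a\<in>{1..n}. (c - int a) ^ 2) = int n * c^2 - 2 * c * (\<Sum>a\<in>{1..n}. int a) + (\<Sum>a\<in>{1..n}. int a ^ 2)"
    by simp
  have "6 * (\<Sum>a\<in>{1..n}. (c - int a) ^ 2) = 6 * int n * c^2 - 6 * c * (int n * (int n + 1)) + int n * (int n + 1) * (2 * int n + 1)"
    unfolding e using sum1[of n] sum2[of n] by (simp add: algebra_simps)
  then have "6 * (\<Sum>a\<in>{1..n}. (int n + 1 - int a) ^ 2) = 6 * int n * (int n + 1)^2 - 6 * (int n + 1) * (int n * (int n + 1)) + int n * (int n + 1) * (2 * int n + 1)"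
    unfolding c_def .
  then have "6 * GG 2 (Suc n) = 6 * GG 2 n + 2 * (6 * int n * (int n + 1)^2 - 6 * (int n + 1) * (int n * (int n + 1)) + int n * (int n + 1) * (2 * int n + 1))"
    by (simp add: GG_Suc)
  then show ?case unfolding Suc by (simp add: algebra_simps power2_eq_square)
qed


lemma total:
  assumes "is_LHD n m X"
  shows "(\<Sum>i<n. \<Sum>j<n. DD q m X i j) = int m * GG q n"
proof -
  have "(\<Sum>i<n. \<Sum>j<n. DD q m X i j) = (\<Sum>k<m. \<Sum>i<n. \<Sum>j<n. \<bar>int (X i k) - int (X j k)\<bar> ^ q)"
  proof -
    have "(\<Sum>i<n. \<Sum>j<n. DD q m X i j) = (\<Sum>i<n. \<Sum>k<m. \<Sum>j<n. \<bar>int (X i k) - int (X j k)\<bar> ^ q)"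
      unfolding DD_def by (rule sum.cong[OF refl], rule sum.swap)
    also have "\<dots> = (\<Sum>k<m. \<Sum>i<n. \<Sum>j<n. \<bar>int (X i k) - int (X j k)\<bar> ^ q)"
      by (rule sum.swap)
    finally show ?thesis .
  qed
  also have "\<dots> = (\<Sum>k<m. GG q n)"
  proof (rule sum.cong)
    fix k assume k: "k \<in> {..<m}"
    have b: "bij_betw (\<lambda>i. X i k) {..<n} {1..n}"
      using assms k unfolding is_LHD_def by (auto simp: atLeast0LessThan)
    have "(\<Sum>i<n. \<Sum>j<n. \<bar>int (X i k) - int (X j k)\<bar> ^ q)
        = (\<Sum>i<n. \<Sum>b\<in>{1..n}. \<bar>int (X i k) - int b\<bar> ^ q)"
      by (rule sum.cong[OF refl], rule sum.reindex_bij_betw[OF b, where g="\<lambda>b. \<bar>int (X _ k) - int b\<bar> ^ q"])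
    also have "\<dots> = GG q n" unfolding GG_def
      by (rule sum.reindex_bij_betw[OF b, where g="\<lambda>a. \<Sum>b\<in>{1..n}. \<bar>int a - int b\<bar> ^ q"])
    finally show "(\<Sum>i<n. \<Sum>j<n. \<bar>int (X i k) - int (X j k)\<bar> ^ q) = GG q n" .
  qed simp
  finally show ?thesis by simp
qed



lemma exists_pair:
  fixes T :: int
  assumes "is_LHD n m X" "q > 0" "n \<ge> 2"
    and bound: "int n * (int n - 1) * (T + 1) > int m * GG q n"
  shows "\<exists>i j. i < j \<and> j < n \<and> DD q m X i j \<le> T"
proof (rule ccontr)
  assume "\<not> ?thesis"
  then have h: "\<And>i j. i < j \<Longrightarrow> j < n \<Longrightarrow> T + 1 \<le> DD q m X i j" by force
  have sym: "DD q m X i j = DD q m X j i" for i j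
    unfolding DD_def by (simp add: abs_minus_commute)
  have h2: "(if i = j then 0 else T + 1) \<le> DD q m X i j" if "i < n" "j < n" for i j
  proof (cases "i = j")
    case True then show ?thesis using assms(2) by (simp add: DD_def)
  next
    case False
    then show ?thesis using h[of i j] h[of j i] sym[of i j] that by (auto simp: linorder_neq_iff)
  qed
  have row: "(\<Sum>j<n. (if i = j then 0 else T + 1)) = (int n - 1) * (T + 1)" if "i < n" for i
  proof -
    have "(\<Sum>j<n. (if i = j then 0 else T + 1)) = (\<Sum>j\<in>{..<n} - {i}. T + 1)"
      by (rule sum.mono_neutral_cong_right) (auto simp: that)
    also have "\<dots> = (int n - 1) * (T + 1)" using that by (simp add: of_nat_diff)
    finally show ?thesis .
  qed
  have "(\<Sum>i<n. \<Sum>j<n. (if i = j then 0 else T + 1)) \<le> (\<Sum>i<n. \<Sum>j<n. DD q m X i j)"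
    by (intro sum_mono) (use h2 in blast)
  also have "\<dots> = int m * GG q n" using total[OF assms(1)] .
  finally have "int n * ((int n - 1) * (T + 1)) \<le> int m * GG q n"
    using row by simp
  then show False using bound by (simp add: algebra_simps)
qed

lemma dq_le:
  assumes "i < j" "j < n"
  shows "dq q n m X \<le> dq_rows q m X i j"
proof -
  have "{dq_rows q m X i j | i j. i < j \<and> j < n} \<subseteq> (\<lambda>(i,j). dq_rows q m X i j) ` ({..<n} \<times> {..<n})"
    by auto
  then have "finite {dq_rows q m X i j | i j. i < j \<and> j < n}"
    by (rule finite_subset) auto
  then show ?thesis unfolding dq_def by (rule Min_le) (use assms in auto)
qed

lemma dq_rows_DD: "dq_rows q m X i j = root q (real_of_int (DD q m X i j))"
  unfolding dq_rows_def DD_def by simp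



lemma aux:
  fixes k G N c m T :: int
  assumes "N * (k * (T + 1)) > N * (m * c)" "k > 0" "k * G = N * c"
  shows "N * (T + 1) > m * G"
proof -
  have "k * (m * G) = m * (N * c)" using assms(3) by (metis mult.left_commute)
  also have "\<dots> = N * (m * c)" by (simp add: mult_ac)
  also have "\<dots> < N * (k * (T + 1))" by fact
  also have "\<dots> = k * (N * (T + 1))" by (simp add: mult_ac)
  finally show ?thesis using assms(2) by (simp add: mult_less_cancel_left)
qed
theorem lemma1:
  fixes n m :: nat and X :: "nat \<Rightarrow> nat \<Rightarrow> nat"
  assumes "n \<ge> 2" and "m \<ge> 1" and "is_LHD n m X"
  shows "dq 1 n m X \<le> real (((n + 1) * m) div 3)
       \<and> dq 2 n m X \<le> sqrt (real ((n * (n + 1) * m) div 6))"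
proof
  define T where "T = int (((n + 1) * m) div 3)"
  have pos: "int n * (int n - 1) > 0" using assms(1) by simp
  have d: "x < 3 * (x div 3 + 1)" for x :: nat by presburger
  have "int ((n+1)*m) < int (3 * (((n + 1) * m) div 3 + 1))" using d by (simp only: of_nat_less_iff)
  then have "3 * (T + 1) > int m * (int n + 1)" unfolding T_def by (simp add: algebra_simps)
  then have "int n * (int n - 1) * (3 * (T + 1)) > int n * (int n - 1) * (int m * (int n + 1))"
    using pos by (intro mult_strict_left_mono) auto
  then have B: "int n * (int n - 1) * (T + 1) > int m * GG 1 n"
  proof (rule aux[where k=3 and c="int n + 1"])
    show "3 * GG 1 n = int n * (int n - 1) * (int n + 1)" unfolding GG1 by (simp add: algebra_simps)
  qed simp
  then obtain i j where ij: "i < j" "j < n" "DD 1 m X i j \<le> T"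
    using exists_pair[OF assms(3) _ assms(1) B] by auto
  have "dq 1 n m X \<le> dq_rows 1 m X i j" by (rule dq_le[OF ij(1,2)])
  also have "\<dots> \<le> real (((n + 1) * m) div 3)"
    using ij(3) unfolding dq_rows_DD T_def by simp
  finally show "dq 1 n m X \<le> real (((n + 1) * m) div 3)" .
next
  define T where "T = int ((n * (n + 1) * m) div 6)"
  have pos: "int n * (int n - 1) > 0" using assms(1) by simp
  have d: "x < 6 * (x div 6 + 1)" for x :: nat by presburger
  have "int (n * (n + 1) * m) < int (6 * ((n * (n + 1) * m) div 6 + 1))" using d by (simp only: of_nat_less_iff)
  then have "6 * (T + 1) > int m * (int n * (int n + 1))" unfolding T_def by (simp add: algebra_simps)
  then have "int n * (int n - 1) * (6 * (T + 1)) > int n * (int n - 1) * (int m * (int n * (int n + 1)))"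
    using pos by (intro mult_strict_left_mono) auto
  then have B: "int n * (int n - 1) * (T + 1) > int m * GG 2 n"
  proof (rule aux[where k=6 and c="int n * (int n + 1)"])
    show "6 * GG 2 n = int n * (int n - 1) * (int n * (int n + 1))" unfolding GG2 by (simp add: algebra_simps)
  qed simp
  then obtain i j where ij: "i < j" "j < n" "DD 2 m X i j \<le> T"
    using exists_pair[OF assms(3) _ assms(1) B] by auto
  have "dq 2 n m X \<le> dq_rows 2 m X i j" by (rule dq_le[OF ij(1,2)])
  also have "\<dots> \<le> sqrt (real ((n * (n + 1) * m) div 6))"
    using ij(3) unfolding dq_rows_DD T_def sqrt_def by simp
  finally show "dq 2 n m X \<le> sqrt (real ((n * (n + 1) * m) div 6))" .
qed


end
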